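(* Let $x,y$ be non-commuting indeterminates and let $C=xyx^{-1}y^{-1}$. Let $(R_n)_{n\in\mathbb Z}$ be the unique solution of $$R_{n+1}CR_{n-1}=R_n^2+1\qquad(n\in\mathbb Z)$$ with $R_0=yxy^{-1}$ and $R_1=y$. Then for every $n\in\mathbb Z$, $R_n$ is a Laurent polynomial in $x,y$ whose coefficients all lie in $\{0,1\}$. Moreover, let $n\ge 0$ and set $$y_1=R_1R_0^{-1}=y^2x^{-1}y^{-1},\qquad y_2=R_1^{-1}R_0^{-1}=x^{-1}y^{-1},\qquad y_3=R_1^{-1}R_0=xy^{-1}.$$ Consider paths on $\{0,1,2,3\}$ with $2n$ steps of the form $i\to i\pm1$ that start and end at $0$. The weight of such a path is the product, from left to right in the order the steps are taken, of $1$ for each step $i\to i+1$ and $y_i$ for each step $i\to i-1$. Then each Laurent monomial appearing in $R_nR_0^{-1}$ is the weight of exactly one such path.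
   Context: Work in the free skew field (non-commutative rational functions) over $\mathbb C$ generated by $x,y$. A Laurent polynomial in $x,y$ is a $\mathbb Z$-linear combination of words (Laurent monomials) in $x^{\pm1},y^{\pm1}$. Its coefficients are those of its expansion in reduced words. *)

theory Defs
  imports Main
begin

(* Free group F(x,y): letters are (generator, sign); generator False = x, True = y;
   sign True = exponent +1, False = exponent -1.  Group elements = reduced words. *)
type_synonym letter = "bool \<times> bool"
type_synonym word = "letter list"
(* Laurent polynomials = Z-valued finitely supported functions on reduced words *)
type_synonym lpoly = "word \<Rightarrow> int"

definition inv_letter :: "letter \<Rightarrow> letter" where
  "inv_letter a = (fst a, \<not> snd a)"

definition reduced :: "word \<Rightarrow> bool" where
  "reduced w \<longleftrightarrow> (\<forall>i. Suc i < length w \<longrightarrow> w ! Suc i \<noteq> inv_letter (w ! i))"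

fun red_cons :: "letter \<Rightarrow> word \<Rightarrow> word" where
  "red_cons a [] = [a]"
| "red_cons a (b # ws) = (if b = inv_letter a then ws else a # b # ws)"

definition reduce :: "word \<Rightarrow> word" where
  "reduce w = foldr red_cons w []"

definition gmul :: "word \<Rightarrow> word \<Rightarrow> word" where
  "gmul u v = reduce (u @ v)"

definition ginv :: "word \<Rightarrow> word" where
  "ginv w = rev (map inv_letter w)"

definition is_laurent :: "lpoly \<Rightarrow> bool" where
  "is_laurent p \<longleftrightarrow> finite {w. p w \<noteq> 0} \<and> (\<forall>w. p w \<noteq> 0 \<longrightarrow> reduced w)"

definition lmono :: "word \<Rightarrow> lpoly" where
  "lmono w = (\<lambda>v. if v = reduce w then 1 else 0)"

definition ladd :: "lpoly \<Rightarrow> lpoly \<Rightarrow> lpoly" where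
  "ladd p q = (\<lambda>w. p w + q w)"

definition lmul :: "lpoly \<Rightarrow> lpoly \<Rightarrow> lpoly" where
  "lmul p q = (\<lambda>w. \<Sum>(u, v) \<in> {u. p u \<noteq> 0} \<times> {v. q v \<noteq> 0}.
                    if gmul u v = w then p u * q v else 0)"

definition lone :: lpoly where
  "lone = lmono []"

definition xw :: word where "xw = [(False, True)]"
definition yw :: word where "yw = [(True, True)]"

definition C_word :: word where
  "C_word = gmul (gmul xw yw) (gmul (ginv xw) (ginv yw))"

definition R0_word :: word where
  "R0_word = gmul (gmul yw xw) (ginv yw)"

definition y1w :: word where "y1w = gmul yw (ginv R0_word)"
definition y2w :: word where "y2w = gmul (ginv yw) (ginv R0_word)"
definition y3w :: word where "y3w = gmul (ginv yw) R0_word"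

definition paths :: "nat \<Rightarrow> nat list set" where
  "paths n = {s. length s = 2 * n + 1 \<and> hd s = 0 \<and> last s = 0 \<and> set s \<subseteq> {0..3} \<and>
      (\<forall>i. Suc i < length s \<longrightarrow> s ! Suc i = Suc (s ! i) \<or> Suc (s ! Suc i) = s ! i)}"

definition down_wt :: "nat \<Rightarrow> word" where
  "down_wt i = (if i = 1 then y1w else if i = 2 then y2w else if i = 3 then y3w else [])"

definition step_wt :: "nat \<Rightarrow> nat \<Rightarrow> word" where
  "step_wt i j = (if j = Suc i then [] else down_wt i)"

definition path_weight :: "nat list \<Rightarrow> word" where
  "path_weight s = foldl gmul [] (map (\<lambda>(i, j). step_wt i j) (zip s (tl s)))"

end

theory Submission
  imports Defs "HOL-Library.Poly_Mapping"
begin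

lemma inv_inv[simp]: "inv_letter (inv_letter a) = a"
  by (cases a) (simp add: inv_letter_def)

lemma inv_neq[simp]: "inv_letter a \<noteq> a" "a \<noteq> inv_letter a"
  by (cases a; simp add: inv_letter_def)+

lemma inv_letter_eq_iff[simp]: "inv_letter a = inv_letter b \<longleftrightarrow> a = b"
  by (metis inv_inv)

lemma reduced_Nil[simp]: "reduced []"
  by (simp add: reduced_def)

lemma reduced_Cons: "reduced (a # w) \<longleftrightarrow> reduced w \<and> (case w of [] \<Rightarrow> True | b # _ \<Rightarrow> b \<noteq> inv_letter a)"
proof
  assume r: "reduced (a # w)"
  have "reduced w" unfolding reduced_def
  proof (intro allI impI)
    fix i assume "Suc i < length w"
    with r have "(a#w) ! Suc (Suc i) \<noteq> inv_letter ((a#w) ! Suc i)"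
      unfolding reduced_def by (metis Suc_less_eq length_Cons)
    then show "w ! Suc i \<noteq> inv_letter (w ! i)" by simp
  qed
  moreover have "(case w of [] \<Rightarrow> True | b # _ \<Rightarrow> b \<noteq> inv_letter a)"
  proof (cases w)
    case (Cons b ws)
    with r have "(a#w) ! Suc 0 \<noteq> inv_letter ((a#w) ! 0)" unfolding reduced_def by auto
    then show ?thesis using Cons by simp
  qed simp
  ultimately show "reduced w \<and> (case w of [] \<Rightarrow> True | b # _ \<Rightarrow> b \<noteq> inv_letter a)" by simp
next
  assume h: "reduced w \<and> (case w of [] \<Rightarrow> True | b # _ \<Rightarrow> b \<noteq> inv_letter a)"
  show "reduced (a # w)" unfolding reduced_def
  proof (intro allI impI)
    fix i assume i: "Suc i < length (a # w)"
    show "(a # w) ! Suc i \<noteq> inv_letter ((a # w) ! i)"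
    proof (cases i)
      case 0 then show ?thesis using h i by (cases w) auto
    next
      case (Suc j) then show ?thesis using h i unfolding reduced_def by auto
    qed
  qed
qed

lemma reduced_Cons2[simp]: "reduced [a]" "reduced (a # b # w) \<longleftrightarrow> b \<noteq> inv_letter a \<and> reduced (b # w)"
  by (auto simp: reduced_Cons)

lemma reduced_tl: "reduced (a # w) \<Longrightarrow> reduced w"
  by (simp add: reduced_Cons)

lemma red_cons_reduced: "reduced w \<Longrightarrow> reduced (red_cons a w)"
  by (cases w) (auto simp: reduced_Cons split: list.splits)

abbreviation F :: "word \<Rightarrow> word \<Rightarrow> word" where "F u z \<equiv> foldr red_cons u z"

lemma F_reduced: "reduced z \<Longrightarrow> reduced (F u z)"
  by (induction u) (auto intro: red_cons_reduced)

lemma reduce_Cons: "reduce (a # w) = red_cons a (reduce w)"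
  by (simp add: reduce_def)

lemma reduce_Nil[simp]: "reduce [] = []"
  by (simp add: reduce_def)

lemma reduce_reduced[simp]: "reduced (reduce w)"
  unfolding reduce_def by (rule F_reduced) simp

lemma cancel: "reduced w \<Longrightarrow> red_cons a (red_cons (inv_letter a) w) = w"
proof (cases w)
  case (Cons b ws)
  assume r: "reduced w"
  show ?thesis
  proof (cases "b = a")
    case True
    with Cons r show ?thesis by (cases ws) (auto simp: reduced_Cons)
  next
    case False
    with Cons show ?thesis by simp
  qed
qed simp

lemma F_red_cons: "reduced w \<Longrightarrow> reduced z \<Longrightarrow> F (red_cons a w) z = red_cons a (F w z)"
proof (cases w)
  case (Cons b ws)
  assume r: "reduced w" "reduced z"
  show ?thesis
  proof (cases "b = inv_letter a")
    case True
    have "reduced (F ws z)" using r Cons by (auto intro!: F_reduced simp: reduced_Cons)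
    then show ?thesis using Cons True cancel[of "F ws z" a] by simp
  qed (use Cons in simp)
qed simp

lemma F_F: "reduced z \<Longrightarrow> F (F u []) z = F u z"
proof (induction u)
  case (Cons a u)
  have "F (F (a # u) []) z = F (red_cons a (F u [])) z" by simp
  also have "\<dots> = red_cons a (F (F u []) z)"
    by (rule F_red_cons) (auto intro: F_reduced Cons)
  finally show ?case using Cons by simp
qed simp

lemma reduce_append: "reduce (u @ v) = F u (reduce v)"
  by (simp add: reduce_def)

lemma reduce_idem: "reduced w \<Longrightarrow> reduce w = w"
proof (induction w)
  case (Cons a w)
  then have "reduce w = w" by (simp add: reduced_Cons)
  then show ?case using Cons.prems by (cases w) (auto simp: reduce_Cons reduced_Cons)
qed simp

lemma reduce_reduce[simp]: "reduce (reduce w) = reduce w"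
  by (simp add: reduce_idem)

lemma reduce_left: "reduce (reduce u @ v) = reduce (u @ v)"
  by (simp add: reduce_append reduce_def[of u] F_F)

lemma reduce_right: "reduce (u @ reduce v) = reduce (u @ v)"
  by (simp add: reduce_append)

lemma gmul_assoc: "gmul (gmul u v) w = gmul u (gmul v w)"
  unfolding gmul_def by (metis append.assoc reduce_left reduce_right)

lemma gmul_reduced[simp]: "reduced (gmul u v)"
  by (simp add: gmul_def)

lemma F_ginv: "reduced z \<Longrightarrow> F (ginv w) (F w z) = z"
proof (induction w)
  case (Cons a w)
  have r: "reduced (F w z)" using Cons by (simp add: F_reduced)
  have "F (ginv (a # w)) (F (a # w) z) = F (ginv w) (red_cons (inv_letter a) (red_cons a (F w z)))"
    by (simp add: ginv_def)
  also have "\<dots> = F (ginv w) (F w z)" using cancel[OF r, of "inv_letter a"] by simp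
  finally show ?case using Cons by simp
qed (simp add: ginv_def)

lemma ginv_ginv[simp]: "ginv (ginv w) = w"
  by (simp add: ginv_def rev_map comp_def)

lemma reduce_ginv_left: "reduce (ginv w @ w) = []"
  by (simp add: reduce_append reduce_def[of w] F_ginv)

lemma reduce_ginv_right: "reduce (w @ ginv w) = []"
  using reduce_ginv_left[of "ginv w"] by simp

typedef fg = "{w::word. reduced w}" morphisms rep absw
  by (rule exI[of _ "[]"]) simp

setup_lifting type_definition_fg


instantiation fg :: group_add
begin
lift_definition zero_fg :: fg is "[]" by simp
lift_definition plus_fg :: "fg \<Rightarrow> fg \<Rightarrow> fg" is gmul by simp
lift_definition uminus_fg :: "fg \<Rightarrow> fg" is "\<lambda>w. reduce (ginv w)" by simp
definition minus_fg :: "fg \<Rightarrow> fg \<Rightarrow> fg" where "minus_fg a b = a + - b"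
instance
proof
  fix a b c :: fg
  show "a + b + c = a + (b + c)" by transfer (rule gmul_assoc)
  show "0 + a = a" by transfer (simp add: gmul_def reduce_idem)
  show "a + 0 = a" by transfer (simp add: gmul_def reduce_idem)
  show "- a + a = 0" by transfer (simp add: gmul_def reduce_left reduce_ginv_left)
  show "a + - b = a - b" by (simp add: minus_fg_def)
qed
end

lemma absw_plus: "reduced u \<Longrightarrow> reduced v \<Longrightarrow> absw u + absw v = absw (gmul u v)"
  by (simp add: plus_fg_def absw_inverse)

lemma absw_red_inj: "reduced u \<Longrightarrow> reduced v \<Longrightarrow> absw u = absw v \<longleftrightarrow> u = v"
  by (simp add: absw_inject)

lemma zero_fg_absw: "(0::fg) = absw []"
  by (simp add: zero_fg_def)

type_synonym G = "fg \<Rightarrow>\<^sub>0 int"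

definition m :: "word \<Rightarrow> G" where "m w = Poly_Mapping.single (absw (reduce w)) 1"

lemma m_mult: "m u * m v = m (u @ v)"
proof -
  have "absw (reduce u) + absw (reduce v) = absw (reduce (u @ v))"
    by (simp add: absw_plus gmul_def reduce_left reduce_right)
  then show ?thesis by (simp add: m_def mult_single)
qed

lemma m_mult_assoc: "x * m u * m v = x * m (u @ v)"
  by (simp add: mult.assoc m_mult)

lemma single1_eq: "Poly_Mapping.single a (1::int) = Poly_Mapping.single b 1 \<longleftrightarrow> a = b"
  by (metis lookup_single_eq lookup_single_not_eq zero_neq_one)

lemma m_eq: "m u = m v \<longleftrightarrow> reduce u = reduce v"
  by (simp add: m_def absw_inject single1_eq)

lemma m_Nil: "m [] = 1"
  by (simp add: m_def zero_fg_absw[symmetric])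

definition toL :: "G \<Rightarrow> lpoly" where
  "toL p = (\<lambda>w. if reduced w then Poly_Mapping.lookup p (absw w) else 0)"

lemma supp_toL: "{w. toL p w \<noteq> 0} = rep ` Poly_Mapping.keys p"
proof -
  have "w \<in> {w. toL p w \<noteq> 0} \<longleftrightarrow> w \<in> rep ` Poly_Mapping.keys p" for w
  proof
    assume "w \<in> {w. toL p w \<noteq> 0}"
    then have "reduced w" "Poly_Mapping.lookup p (absw w) \<noteq> 0" by (auto simp: toL_def split: if_splits)
    then show "w \<in> rep ` Poly_Mapping.keys p"
      by (metis absw_inverse image_eqI in_keys_iff mem_Collect_eq)
  next
    assume "w \<in> rep ` Poly_Mapping.keys p"
    then obtain k where "k \<in> Poly_Mapping.keys p" "w = rep k" by auto
    then show "w \<in> {w. toL p w \<noteq> 0}"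
      using rep rep_inverse by (auto simp: toL_def in_keys_iff)
  qed
  then show ?thesis by blast
qed

lemma is_laurent_toL: "is_laurent (toL p)"
proof -
  have "finite {w. toL p w \<noteq> 0}" by (simp only: supp_toL) simp
  then show ?thesis unfolding is_laurent_def by (auto simp: toL_def split: if_splits)
qed

lemma toL_add: "toL (p + q) = ladd (toL p) (toL q)"
  by (auto simp: toL_def ladd_def lookup_add)

lemma toL_m: "toL (m w) = lmono w"
proof
  fix v
  show "toL (m w) v = lmono w v"
    unfolding toL_def lmono_def m_def
    by (auto simp: lookup_single when_def absw_inject)
qed

lemma toL_one: "toL 1 = lone"
  by (simp add: lone_def flip: toL_m m_Nil)

lemma lookup_mult_sum:
  "Poly_Mapping.lookup (p * q) k = (\<Sum>(a, b)\<in>Poly_Mapping.keys p \<times> Poly_Mapping.keys q. Poly_Mapping.lookup p a * Poly_Mapping.lookup q b when k = a + b)"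
proof -
  have "Poly_Mapping.lookup (p * q) k = (\<Sum>(a, b). Poly_Mapping.lookup p a * Poly_Mapping.lookup q b when k = a + b)"
    by (simp add: times_poly_mapping.rep_eq prod_fun_unfold_prod)
  also have "\<dots> = (\<Sum>(a, b)\<in>Poly_Mapping.keys p \<times> Poly_Mapping.keys q. Poly_Mapping.lookup p a * Poly_Mapping.lookup q b when k = a + b)"
    by (rule Sum_any.expand_superset) (auto simp: in_keys_iff)
  finally show ?thesis .
qed

lemma toL_mult: "lmul (toL p) (toL q) = toL (p * q)"
proof
  fix w
  have inj: "inj_on (map_prod rep rep) (Poly_Mapping.keys p \<times> Poly_Mapping.keys q)"
    by (auto simp: inj_on_def rep_inject)
  have img: "rep ` Poly_Mapping.keys p \<times> rep ` Poly_Mapping.keys q = map_prod rep rep ` (Poly_Mapping.keys p \<times> Poly_Mapping.keys q)"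
    by (simp add: map_prod_surj_on)
  have "lmul (toL p) (toL q) w =
     (\<Sum>(u, v) \<in> map_prod rep rep ` (Poly_Mapping.keys p \<times> Poly_Mapping.keys q). if gmul u v = w then toL p u * toL q v else 0)"
    unfolding lmul_def supp_toL img ..
  also have "\<dots> = (\<Sum>(a, b) \<in> Poly_Mapping.keys p \<times> Poly_Mapping.keys q. if gmul (rep a) (rep b) = w then toL p (rep a) * toL q (rep b) else 0)"
    by (subst sum.reindex[OF inj]) (auto intro!: sum.cong simp: map_prod_def split: prod.splits)
  also have "\<dots> = toL (p * q) w"
  proof (cases "reduced w")
    case True
    have "(if gmul (rep a) (rep b) = w then toL p (rep a) * toL q (rep b) else 0)
          = (Poly_Mapping.lookup p a * Poly_Mapping.lookup q b when absw w = a + b)" for a b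
    proof -
      have "absw w = a + b \<longleftrightarrow> gmul (rep a) (rep b) = w"
        using True rep[of a] rep[of b]
        by (metis absw_plus absw_red_inj gmul_reduced mem_Collect_eq rep_inverse)
      then show ?thesis using rep[of a] rep[of b] by (auto simp: toL_def when_def rep_inverse)
    qed
    then show ?thesis using True by (simp add: toL_def lookup_mult_sum)
  next
    case False
    then have "gmul (rep a) (rep b) \<noteq> w" for a b using gmul_reduced by metis
    then show ?thesis using False by (simp add: toL_def)
  qed
  finally show "lmul (toL p) (toL q) w = toL (p * q) w" .
qed


abbreviation "lx \<equiv> (False, True)"
abbreviation "lX \<equiv> (False, False)"
abbreviation "ly \<equiv> (True, True)"
abbreviation "lY \<equiv> (True, False)"

lemmas evsimps = reduce_def inv_letter_def gmul_def ginv_def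

lemma words:
  "R0_word = [ly, lx, lY]" "C_word = [lx, ly, lX, lY]" "yw = [ly]" "xw = [lx]"
  "ginv R0_word = [ly, lX, lY]"
  "y1w = [ly, ly, lX, lY]" "y2w = [lX, lY]" "y3w = [lx, lY]"
  by (simp_all add: R0_word_def C_word_def yw_def xw_def y1w_def y2w_def y3w_def evsimps)

definition pl :: "(int \<times> word) list \<Rightarrow> G" where
  "pl l = (\<Sum>(c, u)\<leftarrow>l. Poly_Mapping.single (absw (reduce u)) c)"

lemma pl_Nil: "pl [] = 0" by (simp add: pl_def)
lemma pl_Cons: "pl ((c, u) # l) = Poly_Mapping.single (absw (reduce u)) c + pl l" by (simp add: pl_def)
lemma pl_append: "pl (l1 @ l2) = pl l1 + pl l2" by (simp add: pl_def)
lemma pl_add: "pl l1 + pl l2 = pl (l1 @ l2)" by (simp add: pl_def)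
lemma m_pl: "m u = pl [(1, u)]" by (simp add: pl_def m_def)
lemma pl_one: "1 = pl [(1, [])]" by (simp add: m_Nil[symmetric] m_pl)
lemma pl_zero: "0 = pl []" by (simp add: pl_def)

definition negl :: "(int \<times> word) list \<Rightarrow> (int \<times> word) list" where
  "negl l = map (\<lambda>(c, u). (- c, u)) l"

lemma pl_uminus: "- pl l = pl (negl l)"
  by (induction l) (auto simp: pl_def negl_def single_uminus)

lemma pl_minus: "pl l1 - pl l2 = pl (l1 @ negl l2)"
  by (simp add: pl_append pl_uminus[symmetric])

definition mull :: "(int \<times> word) list \<Rightarrow> (int \<times> word) list \<Rightarrow> (int \<times> word) list" where
  "mull l1 l2 = concat (map (\<lambda>(c, u). map (\<lambda>(d, v). (c * d, u @ v)) l2) l1)"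

lemma single_mult_reduce: "Poly_Mapping.single (absw (reduce u)) c * Poly_Mapping.single (absw (reduce v)) d
   = (Poly_Mapping.single (absw (reduce (u @ v))) (c * d) :: G)"
proof -
  have "absw (reduce u) + absw (reduce v) = absw (reduce (u @ v))"
    by (simp add: absw_plus gmul_def reduce_left reduce_right)
  then show ?thesis by (simp add: mult_single)
qed

lemma pl_mult: "pl l1 * pl l2 = pl (mull l1 l2)"
proof (induction l1)
  case Nil then show ?case by (simp add: pl_def mull_def)
next
  case (Cons a l1)
  obtain c u where a: "a = (c, u)" by fastforce
  have "Poly_Mapping.single (absw (reduce u)) c * pl l2 = pl (map (\<lambda>(d, v). (c * d, u @ v)) l2)"
    by (induction l2) (auto simp: pl_def distrib_left single_mult_reduce)
  then show ?case using Cons a by (simp add: pl_Cons distrib_right mull_def pl_append)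
qed

definition coefL :: "(int \<times> word) list \<Rightarrow> word \<Rightarrow> int" where
  "coefL l w = sum_list (map (\<lambda>(c, u). if reduce u = w then c else 0) l)"

lemma lookup_pl: "reduced w \<Longrightarrow> Poly_Mapping.lookup (pl l) (absw w) = coefL l w"
proof (induction l)
  case Nil then show ?case by (simp add: pl_def coefL_def)
next
  case (Cons a l)
  obtain c u where a: "a = (c, u)" by fastforce
  have "absw (reduce u) = absw w \<longleftrightarrow> reduce u = w" using Cons.prems by (simp add: absw_inject)
  then show ?case using Cons a by (simp add: pl_Cons lookup_add lookup_single when_def coefL_def)
qed

lemma pl_eqI:
  assumes "\<forall>w \<in> set (map (reduce \<circ> snd) (l1 @ l2)). coefL l1 w = coefL l2 w"
  shows "pl l1 = pl l2"
proof (rule poly_mapping_eqI)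
  fix k
  define w where "w = rep k"
  have wr: "reduced w" and k: "k = absw w" using rep[of k] by (auto simp: w_def rep_inverse)
  show "Poly_Mapping.lookup (pl l1) k = Poly_Mapping.lookup (pl l2) k"
  proof (cases "w \<in> set (map (reduce \<circ> snd) (l1 @ l2))")
    case True then show ?thesis using assms wr k by (simp add: lookup_pl)
  next
    case False
    have z: "\<forall>p \<in> set l. reduce (snd p) \<noteq> w \<Longrightarrow> coefL l w = 0" for l
      unfolding coefL_def by (induction l) auto
    from False have "coefL l1 w = 0" "coefL l2 w = 0" by (auto intro!: z)
    then show ?thesis using wr k by (simp add: lookup_pl)
  qed
qed

definition R0 :: G where "R0 = pl [(1, [ly, lx, lY])]"
definition R1 :: G where "R1 = pl [(1, [ly])]"
definition Cg :: G where "Cg = pl [(1, [lx, ly, lX, lY])]"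
definition Ci :: G where "Ci = pl [(1, [ly, lx, lY, lX])]"
definition A :: G where "A = pl [(1, [ly, lX]), (1, [lY, lX]), (1, [lx, lx, lY, lX])]"

lemmas plsimps = pl_mult pl_add pl_minus negl_def mull_def

lemmas gdefs = R0_def R1_def Cg_def Ci_def A_def

lemma C_Ci: "Cg * Ci = 1" by (simp only: gdefs pl_one pl_zero plsimps, rule pl_eqI, simp add: coefL_def evsimps)
lemma Ci_C: "Ci * Cg = 1" by (simp only: gdefs pl_one pl_zero plsimps, rule pl_eqI, simp add: coefL_def evsimps)

lemma test: "((R1 * A - R0 * Ci) * Cg) * R0 - R1 * R1 = 1" by (simp only: gdefs pl_one pl_zero plsimps, rule pl_eqI, simp add: coefL_def evsimps)


lemmas calc = gdefs pl_one pl_zero plsimps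

fun fwd :: "nat \<Rightarrow> G \<times> G" where
  "fwd 0 = (R0, R1)"
| "fwd (Suc n) = (snd (fwd n), snd (fwd n) * A - fst (fwd n) * Ci)"

fun bwd :: "nat \<Rightarrow> G \<times> G" where
  "bwd 0 = (R0, R1)"
| "bwd (Suc n) = ((fst (bwd n) * A - snd (bwd n)) * Cg, fst (bwd n))"

definition RR :: "int \<Rightarrow> G" where
  "RR z = (if 0 \<le> z then fst (fwd (nat z)) else fst (bwd (nat (- z))))"

lemma RR_nat: "RR (int n) = fst (fwd n)"
  by (simp add: RR_def)

lemma RR_neg: "RR (- int n) = fst (bwd n)"
  by (cases n) (auto simp: RR_def simp del: of_nat_Suc)

lemma snd_fwd: "snd (fwd n) = fst (fwd (Suc n))"
  by simp

lemma snd_bwd: "snd (bwd n) = RR (1 - int n)"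
proof (cases n)
  case 0 then show ?thesis by (simp add: RR_def)
next
  case (Suc k)
  then have "1 - int n = - int k" by simp
  then show ?thesis using Suc by (simp add: RR_neg)
qed

lemma RR0: "RR 0 = R0" and RR1: "RR 1 = R1"
  by (simp_all add: RR_def)

lemma right_rec: "RR (z + 2) = RR (z + 1) * A - RR z * Ci"
proof (cases "0 \<le> z")
  case True
  then obtain n where z: "z = int n" by (metis nonneg_eq_int)
  have "RR (z + 2) = fst (fwd (Suc (Suc n)))" using z RR_nat[of "Suc (Suc n)"] by (simp add: add.commute)
  moreover have "RR (z + 1) = fst (fwd (Suc n))" using z RR_nat[of "Suc n"] by (simp add: add.commute)
  moreover have "RR z = fst (fwd n)" using z RR_nat by simp
  ultimately show ?thesis by simp
next
  case False
  define n where "n = nat (- z - 1)"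
  have z: "z = - int (Suc n)" using False by (simp add: n_def)
  have e1: "RR z = (fst (bwd n) * A - snd (bwd n)) * Cg" using z RR_neg[of "Suc n"] by simp
  have e2: "RR (z + 1) = fst (bwd n)" using z RR_neg[of n] by simp
  have h: "z + 2 = 1 - int n" using z by simp
  have e3: "RR (z + 2) = snd (bwd n)" by (simp only: snd_bwd h)
  have "RR z * Ci = fst (bwd n) * A - snd (bwd n)" using e1 by (simp add: mult.assoc C_Ci)
  then show ?thesis using e2 e3 by simp
qed

lemma Ci_cancel: "x * Ci = 0 \<Longrightarrow> x = (0::G)"
  by (metis Ci_C mult.assoc mult_1_right mult_zero_left)

lemma uniq0:
  fixes S :: "int \<Rightarrow> G"
  assumes rec: "\<And>z. S (z + 2) = S (z + 1) * A - S z * Ci" and s0: "S 0 = 0" and s1: "S 1 = 0"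
  shows "S z = 0"
proof -
  have fw: "S (int n) = 0 \<and> S (int n + 1) = 0" for n
  proof (induction n)
    case 0 then show ?case using s0 s1 by simp
  next
    case (Suc n)
    then show ?case using rec[of "int n"] by (simp add: add.commute add.left_commute)
  qed
  have bw: "S (- int n) = 0 \<and> S (1 - int n) = 0" for n
  proof (induction n)
    case 0 then show ?case using s0 s1 by simp
  next
    case (Suc n)
    have "S (- int (Suc n) + 2) = S (- int (Suc n) + 1) * A - S (- int (Suc n)) * Ci" by (rule rec)
    moreover have "- int (Suc n) + 2 = 1 - int n" "- int (Suc n) + 1 = - int n" by simp_all
    ultimately have "S (- int (Suc n)) * Ci = 0" using Suc by simp
    then have "S (- int (Suc n)) = 0" by (rule Ci_cancel)
    moreover have "1 - int (Suc n) = - int n" by simp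
    ultimately show ?case using Suc by simp
  qed
  show ?thesis
  proof (cases "0 \<le> z")
    case True then show ?thesis using fw by (metis nonneg_eq_int)
  next
    case False then show ?thesis using bw by (metis minus_minus neg_0_le_iff_le nle_le nonneg_eq_int)
  qed
qed

lemma uniq:
  fixes S :: "int \<Rightarrow> G"
  assumes rec: "\<And>z. S (z + 2) = S (z + 1) * A - S z * Ci" and s0: "S a = 0" and s1: "S (a + 1) = 0"
  shows "S z = 0"
proof -
  have "(\<lambda>z. S (z + a)) (z - a) = 0"
    by (rule uniq0) (use rec[of "_ + a"] s0 s1 in \<open>simp_all add: algebra_simps\<close>)
  then show ?thesis by simp
qed

lemma lin_aux:
  fixes r0 r1 r2 r3 r4 :: G
  assumes "r4 = r3 * A - r2 * Ci" "r3 = r2 * A - r1 * Ci" "r2 = r1 * A - r0 * Ci"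
  shows "r4 - A * Cg * r3 + Cg * r2 = (r3 - A * Cg * r2 + Cg * r1) * A - (r2 - A * Cg * r1 + Cg * r0) * Ci"
proof -
  have "r4 - A * Cg * r3 + Cg * r2 - ((r3 - A * Cg * r2 + Cg * r1) * A - (r2 - A * Cg * r1 + Cg * r0) * Ci)
     = (r4 - (r3 * A - r2 * Ci)) - A * Cg * (r3 - (r2 * A - r1 * Ci)) + Cg * (r2 - (r1 * A - r0 * Ci))"
    by (simp add: algebra_simps)
  then show ?thesis using assms by simp
qed

lemma left_rec: "RR (z + 2) = A * Cg * RR (z + 1) - Cg * RR z"
proof -
  define L where "L z = RR (z + 2) - A * Cg * RR (z + 1) + Cg * RR z" for z
  have "L z = 0"
  proof (rule uniq[of L "-1"])
    fix z
    have a4: "RR (z + 4) = RR (z + 3) * A - RR (z + 2) * Ci" using right_rec[of "z + 2"] by (simp add: add.assoc)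
    have a3: "RR (z + 3) = RR (z + 2) * A - RR (z + 1) * Ci" using right_rec[of "z + 1"] by (simp add: add.assoc)
    have a2: "RR (z + 2) = RR (z + 1) * A - RR z * Ci" by (rule right_rec)
    have "RR (z + 4) - A * Cg * RR (z + 3) + Cg * RR (z + 2) = (RR (z + 3) - A * Cg * RR (z + 2) + Cg * RR (z + 1)) * A - (RR (z + 2) - A * Cg * RR (z + 1) + Cg * RR z) * Ci"
      by (rule lin_aux[OF a4 a3 a2])
    then show "L (z + 2) = L (z + 1) * A - L z * Ci"
      unfolding L_def by (simp add: add.assoc)
  next
    have "RR (-1) = (R0 * A - R1) * Cg" using RR_neg[of 1] by simp
    then show "L (-1) = 0" unfolding L_def using RR0 RR1
      by simp (simp only: calc, rule pl_eqI, simp add: coefL_def evsimps)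
  next
    have "RR 2 = R1 * A - R0 * Ci" using right_rec[of 0] RR0 RR1 by simp
    then show "L (-1 + 1) = 0" unfolding L_def using RR0 RR1
      by simp (simp only: calc, rule pl_eqI, simp add: coefL_def evsimps)
  qed
  then show ?thesis unfolding L_def by (simp add: algebra_simps)
qed

lemma quad: "RR (z + 1) * Cg * RR (z - 1) = RR z * RR z + 1"
proof -
  define D where "D z = RR (z + 1) * Cg * RR (z - 1) - RR z * RR z" for z
  have step: "D (z + 1) = D z" for z
  proof -
    have a: "RR (z + 2) = RR (z + 1) * A - RR z * Ci" by (rule right_rec)
    have h1: "z - 1 + 2 = z + 1" and h2: "z - 1 + 1 = z" by simp_all
    have b: "RR (z + 1) = A * Cg * RR z - Cg * RR (z - 1)" using left_rec[of "z - 1"] by (simp only: h1 h2)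
    have "D (z + 1) = RR (z + 2) * Cg * RR z - RR (z + 1) * RR (z + 1)"
      by (simp add: D_def add.assoc)
    also have "\<dots> = (RR (z + 1) * A - RR z * Ci) * Cg * RR z - RR (z + 1) * (A * Cg * RR z - Cg * RR (z - 1))"
      by (subst a, subst (3) b) simp
    also have "\<dots> = RR (z + 1) * A * Cg * RR z - RR z * (Ci * Cg) * RR z
         - RR (z + 1) * A * Cg * RR z + RR (z + 1) * Cg * RR (z - 1)"
      by (simp add: algebra_simps)
    also have "\<dots> = D z" by (simp add: Ci_C D_def)
    finally show ?thesis .
  qed
  have d1: "D 1 = 1"
  proof -
    have "RR 2 = R1 * A - R0 * Ci" using right_rec[of 0] RR0 RR1 by simp
    then have "D 1 = (R1 * A - R0 * Ci) * Cg * R0 - R1 * R1" using RR0 RR1 by (simp add: D_def)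
    also have "\<dots> = 1" by (simp only: calc, rule pl_eqI, simp add: coefL_def evsimps)
    finally show ?thesis .
  qed
  have fw: "D (1 + int n) = 1" for n
  proof (induction n)
    case (Suc n)
    have "1 + int (Suc n) = (1 + int n) + 1" by simp
    then show ?case using step[of "1 + int n"] Suc by simp
  qed (use d1 in simp)
  have bw: "D (1 - int n) = 1" for n
  proof (induction n)
    case (Suc n)
    then show ?case using step[of "1 - int (Suc n)"] by simp
  qed (use d1 in simp)
  have "D z = 1"
  proof (cases "1 \<le> z")
    case True then show ?thesis using fw[of "nat (z - 1)"] by simp
  next
    case False then show ?thesis using bw[of "nat (1 - z)"] by simp
  qed
  then have "RR (z + 1) * Cg * RR (z - 1) - RR z * RR z = 1" by (simp only: D_def)
  then show ?thesis by (metis add.commute diff_add_cancel)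
qed


definition img :: "letter \<Rightarrow> word" where
  "img a = (if a = lx then [ly, lx, ly, lX, lY] else if a = lX then [ly, lx, lY, lX, lY]
            else if a = ly then [ly, lx, lY] else [ly, lX, lY])"

lemma img_inv: "img (inv_letter a) = ginv (img a)"
  by (cases a) (auto simp: img_def evsimps)

fun phiw :: "word \<Rightarrow> word" where
  "phiw [] = []"
| "phiw (a # w) = gmul (phiw w) (img a)"

lemma phiw_reduced[simp]: "reduced (phiw w)"
  by (cases w) auto

lemma gmul_Nil_right: "reduced u \<Longrightarrow> gmul u [] = u"
  by (simp add: gmul_def reduce_idem)

lemma gmul_Nil_left: "reduced u \<Longrightarrow> gmul [] u = u"
  by (simp add: gmul_def reduce_idem)

lemma phiw_red_cons: "phiw (red_cons a w) = phiw (a # w)"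
proof (cases w)
  case (Cons b ws)
  show ?thesis
  proof (cases "b = inv_letter a")
    case True
    have "gmul (img (inv_letter a)) (img a) = []"
      by (simp add: img_inv gmul_def reduce_ginv_left)
    then have "phiw (a # w) = gmul (phiw ws) []" using Cons True
      by (simp add: gmul_assoc)
    then show ?thesis using Cons True by (simp add: gmul_Nil_right)
  qed (use Cons in simp)
qed simp

lemma phiw_reduce: "phiw (reduce w) = phiw w"
  by (induction w) (simp_all add: reduce_Cons phiw_red_cons)

lemma phiw_append: "phiw (u @ v) = gmul (phiw v) (phiw u)"
  by (induction u) (simp_all add: gmul_Nil_right gmul_assoc)

lemma phiw_img: "phiw (img a) = [a]"
  by (cases a) (auto simp: img_def evsimps)

lemma phiw_phiw: "phiw (phiw w) = reduce w"
proof (induction w)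
  case (Cons a w)
  have "phiw (phiw (a # w)) = phiw (phiw w @ img a)"
    by (simp add: gmul_def phiw_reduce)
  also have "\<dots> = gmul [a] (reduce w)" by (simp add: phiw_append phiw_img Cons)
  also have "\<dots> = reduce (a # w)" by (simp add: gmul_def reduce_right reduce_Cons[of a w] reduce_Cons[of a "reduce w"])
  finally show ?case .
qed simp

definition phi :: "fg \<Rightarrow> fg" where "phi g = absw (phiw (rep g))"

lemma rep_plus: "rep (g + h) = gmul (rep g) (rep h)"
  by (simp add: plus_fg.rep_eq)

lemma phi_plus: "phi (g + h) = phi h + phi g"
proof -
  have "phiw (gmul (rep g) (rep h)) = gmul (phiw (rep h)) (phiw (rep g))"
    by (simp add: gmul_def phiw_reduce phiw_append)
  then show ?thesis by (simp add: phi_def rep_plus absw_plus)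
qed

lemma phi_phi[simp]: "phi (phi g) = g"
proof -
  have "rep (absw (phiw (rep g))) = phiw (rep g)" by (simp add: absw_inverse)
  then show ?thesis using rep[of g] by (simp add: phi_def phiw_phiw reduce_idem rep_inverse)
qed

lemma inj_phi: "inj phi"
  by (metis injI phi_phi)

lemma bij_phi: "bij phi"
  by (metis bijI' phi_phi)

definition sig :: "G \<Rightarrow> G" where "sig p = Poly_Mapping.map_key phi p"

lemma lookup_sig: "Poly_Mapping.lookup (sig p) k = Poly_Mapping.lookup p (phi k)"
  by (simp add: sig_def map_key.rep_eq[OF inj_phi])

lemma sig_add: "sig (p + q) = sig p + sig q"
  by (rule poly_mapping_eqI) (simp add: lookup_sig lookup_add)

lemma sig_minus: "sig (p - q) = sig p - sig q"
  by (rule poly_mapping_eqI) (simp add: lookup_sig lookup_minus)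

lemma sig_mult: "sig (p * q) = sig q * sig p"
proof (rule poly_mapping_eqI)
  fix k
  let ?lp = "Poly_Mapping.lookup p" and ?lq = "Poly_Mapping.lookup q"
  have "Poly_Mapping.lookup (sig (p * q)) k = (\<Sum>(a, b). ?lp a * ?lq b when phi k = a + b)"
    by (simp add: lookup_sig times_poly_mapping.rep_eq prod_fun_unfold_prod)
  also have "\<dots> = (\<Sum>(c, d). ?lq (phi c) * ?lp (phi d) when k = c + d)"
  proof (rule Sum_any.reindex_cong[of "\<lambda>(c, d). (phi d, phi c)"])
    show "bij (\<lambda>(c, d). (phi d, phi c))"
      by (rule o_bij[of "\<lambda>(c, d). (phi d, phi c)"]) (auto simp: fun_eq_iff)
    show "(\<lambda>(a, b). ?lp a * ?lq b when phi k = a + b) \<circ> (\<lambda>(c, d). (phi d, phi c))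
        = (\<lambda>(c, d). ?lq (phi c) * ?lp (phi d) when k = c + d)"
    proof (rule ext, clarsimp)
      fix c d
      have "phi k = phi d + phi c \<longleftrightarrow> k = c + d"
        by (metis phi_phi phi_plus)
      then show "(?lp (phi d) * ?lq (phi c) when phi k = phi d + phi c) = (?lq (phi c) * ?lp (phi d) when k = c + d)"
        by (simp add: mult.commute)
    qed
  qed
  also have "\<dots> = Poly_Mapping.lookup (sig q * sig p) k"
    by (simp only: times_poly_mapping.rep_eq prod_fun_unfold_prod[OF finite_lookup finite_lookup] lookup_sig)
  finally show "Poly_Mapping.lookup (sig (p * q)) k = Poly_Mapping.lookup (sig q * sig p) k" .
qed

lemma sig_single: "sig (Poly_Mapping.single k c) = Poly_Mapping.single (phi k) c"
  by (rule poly_mapping_eqI) (simp add: lookup_sig lookup_single when_def, metis phi_phi)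

lemma phi_absw: "phi (absw (reduce u)) = absw (reduce (phiw u))"
  by (simp add: phi_def absw_inverse phiw_reduce reduce_idem)

lemma sig_pl: "sig (pl l) = pl (map (\<lambda>(c, u). (c, phiw u)) l)"
proof (induction l)
  case Nil then show ?case by (simp add: pl_def sig_def map_key_zero[OF inj_phi])
next
  case (Cons a l)
  obtain c u where a: "a = (c, u)" by fastforce
  show ?case using Cons a by (simp add: pl_Cons sig_add sig_single phi_absw)
qed

lemma sig_C: "sig Cg = Cg"
  unfolding Cg_def sig_pl by (simp, rule pl_eqI, simp add: coefL_def evsimps img_def)

lemma sig_A: "sig A = Ci * A * Cg"
  unfolding A_def Cg_def Ci_def sig_pl by (simp only: calc, simp, rule pl_eqI, simp add: coefL_def evsimps img_def)

lemma sig_R1: "sig R1 = R0"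
  unfolding R0_def R1_def sig_pl by (simp, rule pl_eqI, simp add: coefL_def evsimps img_def)

lemma sig_R0: "sig R0 = R1"
  unfolding R0_def R1_def sig_pl by (simp, rule pl_eqI, simp add: coefL_def evsimps img_def)

lemma RR_sym: "RR z = sig (RR (1 - z))"
proof -
  define S where "S z = sig (RR (1 - z))" for z
  have recS: "S (z + 2) = S (z + 1) * A - S z * Ci" for z
  proof -
    have e: "RR (-1 - z + 2) = A * Cg * RR (-1 - z + 1) - Cg * RR (-1 - z)" by (rule left_rec)
    have h1: "-1 - z + 2 = 1 - z" and h2: "-1 - z + 1 = 1 - (z + 1)" and h3: "1 - (z + 2) = -1 - z" by simp_all
    have "RR (1 - z) = A * Cg * RR (1 - (z + 1)) - Cg * RR (1 - (z + 2))"
      unfolding h3 using e unfolding h1 h2 .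
    then have "sig (RR (1 - z)) = sig (A * Cg * RR (1 - (z + 1))) - sig (Cg * RR (1 - (z + 2)))"
      by (simp only: sig_minus)
    then have "S z = S (z + 1) * (sig Cg * sig A) - S (z + 2) * sig Cg"
      by (simp only: S_def sig_mult)
    also have "sig Cg * sig A = A * Cg"
    proof -
      have "sig Cg * sig A = (Cg * Ci) * A * Cg" by (simp only: sig_C sig_A mult.assoc)
      then show ?thesis by (simp add: C_Ci)
    qed
    finally have "S z = S (z + 1) * (A * Cg) - S (z + 2) * Cg" by (simp only: sig_C)
    then have "S z * Ci = S (z + 1) * A * (Cg * Ci) - S (z + 2) * (Cg * Ci)"
      by (simp only: left_diff_distrib mult.assoc)
    then have "S z * Ci = S (z + 1) * A - S (z + 2)"
      by (simp add: C_Ci)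
    then show ?thesis by (simp add: algebra_simps)
  qed
  have "(\<lambda>z. S z - RR z) z = 0"
  proof (rule uniq[of _ 0])
    fix z
    show "S (z + 2) - RR (z + 2) = (S (z + 1) - RR (z + 1)) * A - (S z - RR z) * Ci"
      unfolding recS[of z] right_rec[of z] by (simp add: algebra_simps)
  next
    show "S 0 - RR 0 = 0" by (simp add: S_def RR0 RR1 sig_R1)
    show "S (0 + 1) - RR (0 + 1) = 0" by (simp add: S_def RR0 RR1 sig_R0)
  qed
  then show ?thesis by (simp add: S_def)
qed

lemma lookup_RR_sym: "Poly_Mapping.lookup (RR z) k = Poly_Mapping.lookup (RR (1 - z)) (phi k)"
  by (subst RR_sym) (simp add: lookup_sig)


fun steps_ok :: "nat list \<Rightarrow> bool" where
  "steps_ok (a # b # r) = ((b = Suc a \<or> Suc b = a) \<and> steps_ok (b # r))"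
| "steps_ok _ = True"

lemma steps_ok_iff: "steps_ok s \<longleftrightarrow> (\<forall>i. Suc i < length s \<longrightarrow> s ! Suc i = Suc (s ! i) \<or> Suc (s ! Suc i) = s ! i)"
proof (induction s rule: steps_ok.induct)
  case (1 a b r)
  show ?case
  proof
    assume h: "steps_ok (a # b # r)"
    show "\<forall>i. Suc i < length (a # b # r) \<longrightarrow> (a # b # r) ! Suc i = Suc ((a # b # r) ! i) \<or> Suc ((a # b # r) ! Suc i) = (a # b # r) ! i"
    proof (intro allI impI)
      fix i assume i: "Suc i < length (a # b # r)"
      show "(a # b # r) ! Suc i = Suc ((a # b # r) ! i) \<or> Suc ((a # b # r) ! Suc i) = (a # b # r) ! i"
      proof (cases i)
        case 0 then show ?thesis using h by simp
      next
        case (Suc j)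
        then have "Suc j < length (b # r)" using i by simp
        then show ?thesis using h 1 Suc by simp
      qed
    qed
  next
    assume h: "\<forall>i. Suc i < length (a # b # r) \<longrightarrow> (a # b # r) ! Suc i = Suc ((a # b # r) ! i) \<or> Suc ((a # b # r) ! Suc i) = (a # b # r) ! i"
    have "b = Suc a \<or> Suc b = a" using h[rule_format, of 0] by simp
    moreover have "steps_ok (b # r)"
      unfolding 1
    proof (intro allI impI)
      fix i assume "Suc i < length (b # r)"
      then show "(b # r) ! Suc i = Suc ((b # r) ! i) \<or> Suc ((b # r) ! Suc i) = (b # r) ! i"
        using h[rule_format, of "Suc i"] by simp
    qed
    ultimately show "steps_ok (a # b # r)" by simp
  qed
next
  case "2_1" then show ?case by simp
next
  case ("2_2" v) then show ?case by simp
qed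

lemma steps_ok_snoc: "steps_ok (s @ [j]) \<longleftrightarrow> steps_ok s \<and> (s = [] \<or> j = Suc (last s) \<or> Suc j = last s)"
proof (induction s rule: steps_ok.induct)
  case (1 a b r) then show ?case by simp
next
  case "2_1" then show ?case by simp
next
  case ("2_2" v) then show ?case by simp
qed

definition PS :: "nat \<Rightarrow> nat list set" where
  "PS k = {s. length s = k + 1 \<and> hd s = 0 \<and> set s \<subseteq> {0..3} \<and> steps_ok s}"

lemma paths_PS: "paths n = {s \<in> PS (2 * n). last s = 0}"
  unfolding paths_def PS_def steps_ok_iff by blast

lemma PS_0: "PS 0 = {[0]}"
proof -
  have "length s = 1 \<longleftrightarrow> (\<exists>a. s = [a])" for s :: "nat list"
    by (cases s) auto
  then show ?thesis by (auto simp: PS_def)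
qed

lemma PS_Suc: "s \<in> PS (Suc k) \<longleftrightarrow> (\<exists>s' j. s = s' @ [j] \<and> s' \<in> PS k \<and> j \<le> 3 \<and> (j = Suc (last s') \<or> Suc j = last s'))"
proof
  assume s: "s \<in> PS (Suc k)"
  then have "s \<noteq> []" by (auto simp: PS_def)
  then obtain s' j where sj: "s = s' @ [j]" by (metis rev_exhaust)
  have "s' \<noteq> []" using s sj by (auto simp: PS_def)
  then have "hd s = hd s'" using sj by simp
  then show "\<exists>s' j. s = s' @ [j] \<and> s' \<in> PS k \<and> j \<le> 3 \<and> (j = Suc (last s') \<or> Suc j = last s')"
    using s sj \<open>s' \<noteq> []\<close> by (auto simp: PS_def steps_ok_snoc)
next
  assume "\<exists>s' j. s = s' @ [j] \<and> s' \<in> PS k \<and> j \<le> 3 \<and> (j = Suc (last s') \<or> Suc j = last s')"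
  then obtain s' j where h: "s = s' @ [j]" "s' \<in> PS k" "j \<le> 3" "j = Suc (last s') \<or> Suc j = last s'" by blast
  then have "s' \<noteq> []" by (auto simp: PS_def)
  then show "s \<in> PS (Suc k)" using h by (auto simp: PS_def steps_ok_snoc)
qed

lemma PS_nonempty: "s \<in> PS k \<Longrightarrow> s \<noteq> []"
  by (auto simp: PS_def)

lemma PS_last: "s \<in> PS k \<Longrightarrow> last s \<le> 3"
proof -
  assume s: "s \<in> PS k"
  then have "last s \<in> set s" using PS_nonempty last_in_set by blast
  then show ?thesis using s by (auto simp: PS_def)
qed

lemma finite_PS: "finite (PS k)"
proof -
  have "PS k \<subseteq> {s. set s \<subseteq> {0..3} \<and> length s = k + 1}" by (auto simp: PS_def)
  moreover have "finite {s. set s \<subseteq> {0..3::nat} \<and> length s = k + 1}"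
    by (rule finite_lists_length_eq) simp
  ultimately show ?thesis by (rule finite_subset)
qed

lemma PS_parity: "s \<in> PS k \<Longrightarrow> even (k + last s)"
proof (induction k arbitrary: s)
  case 0 then show ?case by (simp add: PS_0)
next
  case (Suc k)
  then obtain s' j where h: "s = s' @ [j]" "s' \<in> PS k" "j = Suc (last s') \<or> Suc j = last s'"
    by (auto simp: PS_Suc)
  then have "even (k + last s')" using Suc.IH by blast
  then show ?case using h by (auto; presburger)
qed

lemma zip_snoc: "s \<noteq> [] \<Longrightarrow> zip (s @ [j]) (tl (s @ [j])) = zip s (tl s) @ [(last s, j)]"
proof (induction s)
  case (Cons a s)
  show ?case
  proof (cases s)
    case Nil then show ?thesis by simp
  next
    case (Cons b r)
    then show ?thesis using Cons.IH by simp
  qed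
qed simp

lemma pw_snoc: "s \<noteq> [] \<Longrightarrow> path_weight (s @ [j]) = gmul (path_weight s) (step_wt (last s) j)"
  unfolding path_weight_def by (subst zip_snoc) simp_all

lemma pw_single: "path_weight [a] = []"
  by (simp add: path_weight_def)

lemma foldl_gmul_reduced: "reduced (foldl gmul [] xs)"
  by (induction xs rule: rev_induct) auto

lemma pw_reduced[simp]: "reduced (path_weight s)"
  by (simp add: path_weight_def foldl_gmul_reduced)


lemma reduced_append: "reduced (u @ v) \<longleftrightarrow> reduced u \<and> reduced v \<and> (u = [] \<or> v = [] \<or> hd v \<noteq> inv_letter (last u))"
proof (induction u)
  case (Cons a u)
  show ?case
  proof (cases u)
    case Nil then show ?thesis by (cases v) (auto simp: reduced_Cons)
  next
    case (Cons b u')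
    then show ?thesis using Cons.IH by (auto simp: reduced_Cons)
  qed
qed simp

lemma F_append_reduced: "reduced (p @ z) \<Longrightarrow> F p z = p @ z"
proof -
  assume r: "reduced (p @ z)"
  then have "reduced z" by (simp add: reduced_append)
  then have "F p z = reduce (p @ z)" by (simp add: reduce_append reduce_idem)
  then show ?thesis using r by (simp add: reduce_idem)
qed

definition Dw :: "word \<Rightarrow> bool" where
  "Dw w \<longleftrightarrow> w = [] \<or> (\<exists>p e. w = p @ [(False, e), lY])"

definition lastlab :: "word \<Rightarrow> nat" where
  "lastlab w = (case rev w of a # b # r \<Rightarrow> (if b = lx then 3 else (case r of c # _ \<Rightarrow> if c = ly then 1 else 2 | [] \<Rightarrow> 2)) | _ \<Rightarrow> 0)"

lemma down_wt_words: "down_wt 1 = [ly, ly, lX, lY]" "down_wt (Suc 0) = [ly, ly, lX, lY]" "down_wt 2 = [lX, lY]" "down_wt 3 = [lx, lY]"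
  by (simp_all add: down_wt_def words)

lemma gmul_down:
  assumes D: "Dw w" and r: "reduced w" and i: "i \<in> {1, 2, 3}"
  shows "Dw (gmul w (down_wt i)) \<and> lastlab (gmul w (down_wt i)) = i"
proof (cases "w = []")
  case True
  then show ?thesis using i by (auto simp: down_wt_words gmul_def evsimps Dw_def lastlab_def)
next
  case False
  then obtain p e where w: "w = p @ [(False, e), lY]" using D by (auto simp: Dw_def)
  have rp: "reduced (p @ [(False, e)])" using r w by (simp add: reduced_append)
  have lastcond: "p = [] \<or> (False, e) \<noteq> inv_letter (last p)" and rpp: "reduced p"
    using rp by (simp_all add: reduced_append)
  show ?thesis
  proof (cases "i = 1")
    case True
    have t: "reduce ([(False, e), lY] @ [ly, ly, lX, lY]) = [(False, e), ly, lX, lY]"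
      by (cases e) (simp_all add: evsimps)
    have rr: "reduced (p @ [(False, e), ly, lX, lY])"
      using lastcond rpp by (auto simp: reduced_append inv_letter_def)
    have "gmul w (down_wt i) = p @ [(False, e), ly, lX, lY]"
      using True w t rr by (simp add: down_wt_words gmul_def reduce_append[of p] F_append_reduced del: append.simps)
    then show ?thesis using True by (auto simp: Dw_def lastlab_def)
  next
    case False
    then have i23: "i = 2 \<or> i = 3" using i by auto
    have rr: "reduced (w @ down_wt i)"
      using r i23 w by (auto simp: reduced_append down_wt_words inv_letter_def)
    then have "gmul w (down_wt i) = w @ down_wt i" by (simp add: gmul_def reduce_idem)
    then show ?thesis using i23 w by (auto simp: down_wt_words Dw_def lastlab_def)
  qed
qed

lemma gmul_Nil_r: "reduced u \<Longrightarrow> gmul u [] = u"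
  by (simp add: gmul_def reduce_idem)

lemma path_inv: "s \<in> PS k \<Longrightarrow> Dw (path_weight s) \<and> lastlab (path_weight s) \<le> last s + 1"
proof (induction k arbitrary: s)
  case 0 then show ?case by (simp add: PS_0 pw_single Dw_def lastlab_def)
next
  case (Suc k)
  then obtain s' j where h: "s = s' @ [j]" "s' \<in> PS k" "j \<le> 3" "j = Suc (last s') \<or> Suc j = last s'"
    by (auto simp: PS_Suc)
  have ne: "s' \<noteq> []" using h PS_nonempty by blast
  have pw: "path_weight s = gmul (path_weight s') (step_wt (last s') j)" using h ne by (simp add: pw_snoc)
  have IH: "Dw (path_weight s') \<and> lastlab (path_weight s') \<le> last s' + 1" using Suc.IH h by blast
  show ?case
  proof (cases "j = Suc (last s')")
    case True
    then have "path_weight s = path_weight s'" using pw by (simp add: step_wt_def gmul_Nil_r)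
    then show ?thesis using IH True h by simp
  next
    case False
    then have lj: "last s' = Suc j" using h by simp
    have "last s' \<le> 3" using h PS_last by blast
    then have "Suc j \<in> {1, 2, 3}" using lj by auto
    moreover have "step_wt (last s') j = down_wt (Suc j)" using lj by (simp add: step_wt_def)
    ultimately show ?thesis using gmul_down[of "path_weight s'" "Suc j"] IH pw h by simp
  qed
qed

lemma gmul_cancel_right: "reduced u \<Longrightarrow> reduced v \<Longrightarrow> gmul u y = gmul v y \<Longrightarrow> u = v"
proof -
  assume ru: "reduced u" and rv: "reduced v" and e: "gmul u y = gmul v y"
  have c: "gmul y (ginv y) = []" by (simp add: gmul_def reduce_ginv_right)
  have "u = gmul (gmul u y) (ginv y)" by (simp add: gmul_assoc c gmul_Nil_r ru)
  also have "\<dots> = gmul (gmul v y) (ginv y)" using e by simp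
  also have "\<dots> = v" by (simp add: gmul_assoc c gmul_Nil_r rv)
  finally show ?thesis .
qed

lemma path_inj: "s \<in> PS k \<Longrightarrow> t \<in> PS k \<Longrightarrow> last s = last t \<Longrightarrow> path_weight s = path_weight t \<Longrightarrow> s = t"
proof (induction k arbitrary: s t)
  case 0 then show ?case by (simp add: PS_0)
next
  case (Suc k)
  obtain s' j where hs: "s = s' @ [j]" "s' \<in> PS k" "j \<le> 3" "j = Suc (last s') \<or> Suc j = last s'"
    using Suc.prems by (auto simp: PS_Suc)
  obtain t' j' where ht: "t = t' @ [j']" "t' \<in> PS k" "j' \<le> 3" "j' = Suc (last t') \<or> Suc j' = last t'"
    using Suc.prems by (auto simp: PS_Suc)
  have jj: "j' = j" using hs ht Suc.prems by simp
  have nes: "s' \<noteq> []" and net: "t' \<noteq> []" using hs ht PS_nonempty by blast+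
  have pws: "path_weight s = gmul (path_weight s') (step_wt (last s') j)" using hs nes by (simp add: pw_snoc)
  have pwt: "path_weight t = gmul (path_weight t') (step_wt (last t') j)" using ht net jj by (simp add: pw_snoc)
  have invs: "lastlab (path_weight s) = (if j = Suc (last s') then lastlab (path_weight s') else last s')"
    and ls: "lastlab (path_weight s') \<le> last s' + 1"
  proof -
    have IH: "Dw (path_weight s') \<and> lastlab (path_weight s') \<le> last s' + 1" using path_inv hs by blast
    then show "lastlab (path_weight s') \<le> last s' + 1" by simp
    show "lastlab (path_weight s) = (if j = Suc (last s') then lastlab (path_weight s') else last s')"
    proof (cases "j = Suc (last s')")
      case True then show ?thesis using pws by (simp add: step_wt_def gmul_Nil_r)
    next
      case False
      then have lj: "last s' = Suc j" using hs by simp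
      have "last s' \<le> 3" using hs PS_last by blast
      then have "Suc j \<in> {1, 2, 3}" using lj by auto
      moreover have "step_wt (last s') j = down_wt (Suc j)" using lj by (simp add: step_wt_def)
      ultimately show ?thesis using gmul_down[of "path_weight s'" "Suc j"] IH pws lj False by simp
    qed
  qed
  have invt: "lastlab (path_weight t) = (if j = Suc (last t') then lastlab (path_weight t') else last t')"
    and lt: "lastlab (path_weight t') \<le> last t' + 1"
  proof -
    have IH: "Dw (path_weight t') \<and> lastlab (path_weight t') \<le> last t' + 1" using path_inv ht by blast
    then show "lastlab (path_weight t') \<le> last t' + 1" by simp
    show "lastlab (path_weight t) = (if j = Suc (last t') then lastlab (path_weight t') else last t')"
    proof (cases "j = Suc (last t')")
      case True then show ?thesis using pwt by (simp add: step_wt_def gmul_Nil_r)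
    next
      case False
      then have lj: "last t' = Suc j" using ht jj by simp
      have "last t' \<le> 3" using ht PS_last by blast
      then have "Suc j \<in> {1, 2, 3}" using lj by auto
      moreover have "step_wt (last t') j = down_wt (Suc j)" using lj by (simp add: step_wt_def)
      ultimately show ?thesis using gmul_down[of "path_weight t'" "Suc j"] IH pwt lj False by simp
    qed
  qed
  have same_last: "last s' = last t'"
  proof (rule ccontr)
    assume ne: "last s' \<noteq> last t'"
    have "j = Suc (last s') \<or> Suc j = last s'" "j = Suc (last t') \<or> Suc j = last t'" using hs ht jj by auto
    then have "(j = Suc (last s') \<and> Suc j = last t') \<or> (j = Suc (last t') \<and> Suc j = last s')" using ne by auto
    then show False
    proof
      assume a: "j = Suc (last s') \<and> Suc j = last t'"
      then have "lastlab (path_weight s) \<le> j" using invs ls by simp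
      moreover have "lastlab (path_weight t) = Suc j" using invt a by simp
      ultimately show False using Suc.prems by simp
    next
      assume a: "j = Suc (last t') \<and> Suc j = last s'"
      then have "lastlab (path_weight t) \<le> j" using invt lt by simp
      moreover have "lastlab (path_weight s) = Suc j" using invs a by simp
      ultimately show False using Suc.prems by simp
    qed
  qed
  have "gmul (path_weight s') (step_wt (last s') j) = gmul (path_weight t') (step_wt (last s') j)"
    using pws pwt same_last Suc.prems(4) by simp
  then have "path_weight s' = path_weight t'"
    by (rule gmul_cancel_right[OF pw_reduced pw_reduced])
  then have "s' = t'" using Suc.IH hs ht same_last by blast
  then show ?case using hs ht jj by simp
qed


definition Yg :: "nat \<Rightarrow> G" where "Yg i = Poly_Mapping.single (absw (down_wt i)) 1"

lemma down_wt_reduced: "reduced (down_wt i)"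
  by (simp add: down_wt_def words inv_letter_def)

lemma Yg_pl: "Yg 1 = pl [(1, [ly, ly, lX, lY])]" "Yg 2 = pl [(1, [lX, lY])]" "Yg 3 = pl [(1, [lx, lY])]"
  by (simp_all add: Yg_def pl_def down_wt_words evsimps)

definition W :: "nat \<Rightarrow> nat \<Rightarrow> G" where
  "W k j = (\<Sum>s \<in> {s \<in> PS k. last s = j}. Poly_Mapping.single (absw (path_weight s)) 1)"

lemma finite_PSj: "finite {s \<in> PS k. P s}"
  using finite_PS by simp

lemma lookup_W: "Poly_Mapping.lookup (W k j) g = int (card {s \<in> PS k. last s = j \<and> absw (path_weight s) = g})"
proof -
  have "Poly_Mapping.lookup (W k j) g = (\<Sum>s \<in> {s \<in> PS k. last s = j}. if absw (path_weight s) = g then 1 else 0)"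
    by (auto simp: W_def lookup_sum lookup_single when_def intro!: sum.cong)
  also have "\<dots> = int (card {s \<in> {s \<in> PS k. last s = j}. absw (path_weight s) = g})"
  proof -
    have c: "\<And>S P. finite S \<Longrightarrow> (\<Sum>s\<in>S. if P s then (1::int) else 0) = int (card {s\<in>S. P s})"
      by (simp add: sum.inter_filter[symmetric])
    show ?thesis by (rule c[OF finite_PSj])
  qed
  also have "{s \<in> {s \<in> PS k. last s = j}. absw (path_weight s) = g} = {s \<in> PS k. last s = j \<and> absw (path_weight s) = g}"
    by blast
  finally show ?thesis .
qed

lemma W_0: "W 0 j = (if j = 0 then 1 else 0)"
proof -
  have "{s \<in> PS 0. last s = j} = (if j = 0 then {[0]} else {})" by (auto simp: PS_0)
  then show ?thesis by (simp add: W_def pw_single zero_fg_absw[symmetric])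
qed

lemma W_empty: assumes "{s \<in> PS k. last s = j} = {}" shows "W k j = 0"
  by (simp only: W_def assms sum.empty)

lemma W_parity: "odd (k + j) \<Longrightarrow> W k j = 0"
  by (rule W_empty) (auto dest: PS_parity)

lemma absw_gmul: "reduced u \<Longrightarrow> reduced v \<Longrightarrow> absw (gmul u v) = absw u + absw v"
  by (simp add: absw_plus)

lemma W_rec:
  assumes j: "j \<le> 3"
  shows "W (Suc k) j = (if 0 < j then W k (j - 1) else 0) + (if j < 3 then W k (Suc j) * Yg (Suc j) else 0)"
proof -
  define S1 where "S1 = {s' \<in> PS k. last s' = j - 1 \<and> 0 < j}"
  define S2 where "S2 = {s' \<in> PS k. last s' = Suc j \<and> j < 3}"
  define f where "f s = (Poly_Mapping.single (absw (path_weight s)) 1 :: G)" for s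
  have seteq: "{s \<in> PS (Suc k). last s = j} = (\<lambda>s'. s' @ [j]) ` (S1 \<union> S2)"
  proof (rule set_eqI)
    fix s
    show "s \<in> {s \<in> PS (Suc k). last s = j} \<longleftrightarrow> s \<in> (\<lambda>s'. s' @ [j]) ` (S1 \<union> S2)"
    proof
      assume "s \<in> {s \<in> PS (Suc k). last s = j}"
      then obtain s' where h: "s = s' @ [j]" "s' \<in> PS k" "j = Suc (last s') \<or> Suc j = last s'"
        by (auto simp: PS_Suc)
      have "last s' \<le> 3" using h PS_last by blast
      then have "s' \<in> S1 \<union> S2" using h by (auto simp: S1_def S2_def)
      then show "s \<in> (\<lambda>s'. s' @ [j]) ` (S1 \<union> S2)" using h by blast
    next
      assume "s \<in> (\<lambda>s'. s' @ [j]) ` (S1 \<union> S2)"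
      then obtain s' where h: "s = s' @ [j]" "s' \<in> S1 \<union> S2" by blast
      then have "s' \<in> PS k" "j = Suc (last s') \<or> Suc j = last s'" by (auto simp: S1_def S2_def)
      then show "s \<in> {s \<in> PS (Suc k). last s = j}" using h j by (auto simp: PS_Suc)
    qed
  qed
  have inj: "inj_on (\<lambda>s'. s' @ [j]) (S1 \<union> S2)" by (auto simp: inj_on_def)
  have fin1: "finite S1" and fin2: "finite S2" unfolding S1_def S2_def by (rule finite_PSj)+
  have disj: "S1 \<inter> S2 = {}" by (auto simp: S1_def S2_def)
  have "W (Suc k) j = (\<Sum>s' \<in> S1 \<union> S2. f (s' @ [j]))"
    unfolding W_def seteq f_def by (simp add: sum.reindex[OF inj])
  also have "\<dots> = (\<Sum>s' \<in> S1. f (s' @ [j])) + (\<Sum>s' \<in> S2. f (s' @ [j]))"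
    by (rule sum.union_disjoint[OF fin1 fin2 disj])
  also have "(\<Sum>s' \<in> S1. f (s' @ [j])) = (if 0 < j then W k (j - 1) else 0)"
  proof (cases "0 < j")
    case True
    have "f (s' @ [j]) = f s'" if "s' \<in> S1" for s'
    proof -
      have "s' \<noteq> []" "last s' = j - 1" using that PS_nonempty by (auto simp: S1_def)
      then show ?thesis using True by (simp add: f_def pw_snoc step_wt_def gmul_Nil_r)
    qed
    then show ?thesis using True by (simp add: W_def S1_def f_def)
  qed (simp add: S1_def)
  also have "(\<Sum>s' \<in> S2. f (s' @ [j])) = (if j < 3 then W k (Suc j) * Yg (Suc j) else 0)"
  proof (cases "j < 3")
    case True
    have "f (s' @ [j]) = f s' * Yg (Suc j)" if "s' \<in> S2" for s'
    proof -
      have "s' \<noteq> []" "last s' = Suc j" using that PS_nonempty by (auto simp: S2_def)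
      then have "path_weight (s' @ [j]) = gmul (path_weight s') (down_wt (Suc j))"
        by (simp add: pw_snoc step_wt_def)
      then show ?thesis by (simp add: f_def Yg_def absw_gmul down_wt_reduced mult_single)
    qed
    then show ?thesis using True by (simp add: W_def S2_def f_def sum_distrib_right)
  qed (simp add: S2_def)
  finally show ?thesis .
qed

definition aa :: "nat \<Rightarrow> G" where "aa n = W (2 * n) 0"
definition bb :: "nat \<Rightarrow> G" where "bb n = W (2 * n) 2"

lemma W_odd1: "W (Suc (2 * n)) 1 = aa n + bb n * Yg 2"
  using W_rec[of 1 "2 * n"] by (simp add: aa_def bb_def numeral_2_eq_2)

lemma W_odd3: "W (Suc (2 * n)) 3 = bb n"
proof -
  have "W (Suc (2 * n)) 3 = W (2 * n) 2" using W_rec[of 3 "2 * n"] by (simp add: numeral_3_eq_3 numeral_2_eq_2)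
  then show ?thesis by (simp add: bb_def)
qed

lemma aa_Suc: "aa (Suc n) = (aa n + bb n * Yg 2) * Yg 1"
proof -
  have "aa (Suc n) = W (Suc (Suc (2 * n))) 0" by (simp add: aa_def)
  also have "\<dots> = W (Suc (2 * n)) 1 * Yg 1" using W_rec[of 0 "Suc (2 * n)"] by simp
  finally show ?thesis by (simp only: W_odd1)
qed

lemma bb_Suc: "bb (Suc n) = aa n + bb n * Yg 2 + bb n * Yg 3"
proof -
  have "bb (Suc n) = W (Suc (Suc (2 * n))) 2" by (simp add: bb_def)
  also have "\<dots> = W (Suc (2 * n)) 1 + W (Suc (2 * n)) 3 * Yg 3"
    using W_rec[of 2 "Suc (2 * n)"] by (simp add: numeral_2_eq_2 numeral_3_eq_3)
  finally show ?thesis by (simp only: W_odd1 W_odd3 add.assoc)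
qed

lemma aa0: "aa 0 = 1" and bb0: "bb 0 = 0"
  by (simp_all add: aa_def bb_def W_0)

definition Ui :: G where "Ui = pl [(1, [ly, lx, lY, lx])]"

lemma K0: "Yg 2 * Yg 1 * Ui = 1"
  unfolding Yg_pl Ui_def by (simp only: calc, rule pl_eqI, simp add: coefL_def evsimps)

lemma K1: "Yg 1 * R0 + Ui * (Yg 2 + Yg 3) * Yg 2 * Yg 1 * R0 = R0 * A"
  unfolding Yg_pl Ui_def by (simp only: calc, rule pl_eqI, simp add: coefL_def evsimps)

lemma K2: "Yg 2 * Yg 1 * R0 - Yg 1 * Ui * (Yg 2 + Yg 3) * Yg 2 * Yg 1 * R0 = - (R0 * Ci)"
  unfolding Yg_pl Ui_def by (simp only: calc pl_uminus, rule pl_eqI, simp add: coefL_def evsimps)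

lemma K3: "Yg 1 * R0 = R1"
  unfolding Yg_pl by (simp only: calc, rule pl_eqI, simp add: coefL_def evsimps)

lemma abs_step:
  fixes a0 a1 a2 b0 b1 Y1 Y2 Y3 U :: G
  assumes e1: "a1 = (a0 + b0 * Y2) * Y1" and e2: "b1 = a0 + b0 * Y2 + b0 * Y3"
    and e3: "a2 = (a1 + b1 * Y2) * Y1" and k0: "Y2 * Y1 * U = 1"
    and k1: "Y1 * R0 + U * (Y2 + Y3) * Y2 * Y1 * R0 = R0 * A"
    and k2: "Y2 * Y1 * R0 - Y1 * U * (Y2 + Y3) * Y2 * Y1 * R0 = - (R0 * Ci)"
  shows "a2 * R0 = a1 * R0 * A - a0 * R0 * Ci"
proof -
  define T where "T = (Y2 + Y3) * Y2 * Y1 * R0"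
  have x: "b0 * Y2 * Y1 = a1 - a0 * Y1" using e1 by (simp add: algebra_simps)
  have "b0 * T = b0 * (Y2 * Y1 * U) * T" using k0 by simp
  also have "\<dots> = (b0 * Y2 * Y1) * (U * T)" by (simp add: mult.assoc)
  also have "\<dots> = (a1 - a0 * Y1) * (U * T)" using x by simp
  finally have bT: "b0 * T = (a1 - a0 * Y1) * (U * T)" .
  have "a2 * R0 = a1 * Y1 * R0 + a0 * Y2 * Y1 * R0 + b0 * T"
    using e3 e2 by (simp add: T_def algebra_simps)
  also have "\<dots> = a1 * (Y1 * R0 + U * T) + a0 * (Y2 * Y1 * R0 - Y1 * U * T)"
    using bT by (simp add: algebra_simps)
  also have "Y1 * R0 + U * T = R0 * A" using k1 by (simp add: T_def mult.assoc)
  also have "Y2 * Y1 * R0 - Y1 * U * T = - (R0 * Ci)" using k2 by (simp add: T_def mult.assoc)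
  finally show ?thesis by (simp add: algebra_simps)
qed

lemma RR_aa: "RR (int n) = aa n * R0"
proof -
  have "RR (int n) = aa n * R0 \<and> RR (int n + 1) = aa (Suc n) * R0" for n
  proof (induction n)
    case 0
    have "aa 1 = Yg 1" using aa_Suc[of 0] by (simp add: aa0 bb0)
    then show ?case using K3 by (simp add: RR0 RR1 aa0)
  next
    case (Suc n)
    have step: "aa (Suc (Suc n)) * R0 = aa (Suc n) * R0 * A - aa n * R0 * Ci"
      by (rule abs_step[OF aa_Suc bb_Suc aa_Suc K0 K1 K2])
    have r: "RR (int n + 2) = RR (int n + 1) * A - RR (int n) * Ci" by (rule right_rec)
    have h1: "int (Suc n) = int n + 1" and h2: "int (Suc n) + 1 = int n + 2" by simp_all
    have e1: "RR (int n) = aa n * R0" and e2: "RR (int n + 1) = aa (Suc n) * R0" using Suc.IH by blast+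
    have c1: "RR (int (Suc n)) = aa (Suc n) * R0" unfolding h1 by (rule e2)
    have c2: "RR (int (Suc n) + 1) = aa (Suc (Suc n)) * R0" unfolding h2 r e1 e2 by (rule step[symmetric])
    show ?case using c1 c2 by blast
  qed
  then show ?thesis by blast
qed


lemma lookup_mult_single: "Poly_Mapping.lookup ((p::G) * Poly_Mapping.single r (1::int)) k = Poly_Mapping.lookup p (k - r)"
proof -
  have "Poly_Mapping.lookup (p * Poly_Mapping.single r 1) k
      = (\<Sum>(a, b)\<in>Poly_Mapping.keys p \<times> {r}. Poly_Mapping.lookup p a * Poly_Mapping.lookup (Poly_Mapping.single r 1) b when k = a + b)"
    by (simp add: lookup_mult_sum)
  also have "\<dots> = (\<Sum>a\<in>Poly_Mapping.keys p. if a = k - r then Poly_Mapping.lookup p a else 0)"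
  proof -
    have "k = a + r \<longleftrightarrow> a = k - r" for a by (auto simp: eq_diff_eq)
    then show ?thesis by (simp add: sum.cartesian_product[symmetric] when_def)
  qed
  also have "\<dots> = Poly_Mapping.lookup p (k - r)"
    by (simp add: in_keys_iff)
  finally show ?thesis .
qed

lemma card_le1: "card {s \<in> PS k. last s = j \<and> absw (path_weight s) = g} \<le> 1"
proof -
  have "\<forall>s\<in>{s \<in> PS k. last s = j \<and> absw (path_weight s) = g}. \<forall>t\<in>{s \<in> PS k. last s = j \<and> absw (path_weight s) = g}. s = t"
  proof (intro ballI)
    fix s t assume s: "s \<in> {s \<in> PS k. last s = j \<and> absw (path_weight s) = g}" and t: "t \<in> {s \<in> PS k. last s = j \<and> absw (path_weight s) = g}"
    then have "absw (path_weight s) = absw (path_weight t)" by simp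
    then have "path_weight s = path_weight t" by (simp add: absw_red_inj)
    then show "s = t" using s t path_inj by auto
  qed
  then show ?thesis using finite_PSj by (simp add: card_le_Suc0_iff_eq)
qed

lemma R0_single: "R0 = Poly_Mapping.single (absw [ly, lx, lY]) 1"
  by (simp add: R0_def pl_def evsimps)

lemma coef_nat: "Poly_Mapping.lookup (RR (int n)) k \<in> {0, 1}"
proof -
  have "Poly_Mapping.lookup (RR (int n)) k = Poly_Mapping.lookup (aa n) (k - absw [ly, lx, lY])"
    by (simp add: RR_aa R0_single lookup_mult_single)
  also have "\<dots> = int (card {s \<in> PS (2 * n). last s = 0 \<and> absw (path_weight s) = k - absw [ly, lx, lY]})"
    by (simp add: aa_def lookup_W)
  finally show ?thesis using card_le1[of "2 * n" 0 "k - absw [ly, lx, lY]"]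
    by (auto simp: le_Suc_eq)
qed

lemma coef_all: "Poly_Mapping.lookup (RR z) k \<in> {0, 1}"
proof (cases "0 \<le> z")
  case True then show ?thesis using coef_nat by (metis nonneg_eq_int)
next
  case False
  then have "1 - z = int (nat (1 - z))" by simp
  then show ?thesis using coef_nat[of "nat (1 - z)" "phi k"] lookup_RR_sym[of z k] by simp
qed

lemma lmono_C: "lmono C_word = toL Cg"
  by (simp add: words Cg_def m_pl[symmetric] toL_m)

lemma lmono_R0: "lmono R0_word = toL R0"
  by (simp add: words R0_def m_pl[symmetric] toL_m)

lemma lmono_y: "lmono yw = toL R1"
  by (simp add: words R1_def m_pl[symmetric] toL_m)

lemma lmono_R0i: "lmono (ginv R0_word) = toL (pl [(1, [ly, lX, lY])])"
  unfolding words(5) by (simp add: m_pl[symmetric] toL_m)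

lemma R0_R0i: "R0 * pl [(1, [ly, lX, lY])] = 1"
  unfolding R0_def by (simp only: calc, rule pl_eqI, simp add: coefL_def evsimps)

theorem theorem3p7:
  shows "\<exists>R :: int \<Rightarrow> lpoly.
           R 0 = lmono R0_word \<and> R 1 = lmono yw \<and>
           (\<forall>n. is_laurent (R n)) \<and>
           (\<forall>n. lmul (lmul (R (n + 1)) (lmono C_word)) (R (n - 1)) = ladd (lmul (R n) (R n)) lone) \<and>
           (\<forall>n w. R n w \<in> {0, 1}) \<and>
           (\<forall>n \<ge> 0. \<forall>w. lmul (R n) (lmono (ginv R0_word)) w \<noteq> 0 \<longrightarrow>
               card {s \<in> paths (nat n). path_weight s = w} = 1)"
proof (intro exI[of _ "\<lambda>z. toL (RR z)"] conjI allI impI)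
  show "toL (RR 0) = lmono R0_word" by (simp add: RR0 lmono_R0)
  show "toL (RR 1) = lmono yw" by (simp add: RR1 lmono_y)
  fix n
  show "is_laurent (toL (RR n))" by (rule is_laurent_toL)
  show "lmul (lmul (toL (RR (n + 1))) (lmono C_word)) (toL (RR (n - 1))) = ladd (lmul (toL (RR n)) (toL (RR n))) lone"
    by (simp add: lmono_C toL_mult flip: toL_one toL_add add: quad)
next
  fix n w
  show "toL (RR n) w \<in> {0, 1}" using coef_all[of n "absw w"] by (auto simp: toL_def)
next
  fix n :: int and w
  assume n: "0 \<le> n" and nz: "lmul (toL (RR n)) (lmono (ginv R0_word)) w \<noteq> 0"
  define m where "m = nat n"
  have nm: "n = int m" using n by (simp add: m_def)
  have "lmul (toL (RR n)) (lmono (ginv R0_word)) = toL (aa m)"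
    by (simp add: lmono_R0i toL_mult nm RR_aa mult.assoc R0_R0i)
  then have "toL (aa m) w \<noteq> 0" using nz by simp
  then have rw: "reduced w" and lk: "Poly_Mapping.lookup (aa m) (absw w) \<noteq> 0"
    by (auto simp: toL_def split: if_splits)
  have seteq: "{s \<in> PS (2 * m). last s = 0 \<and> absw (path_weight s) = absw w} = {s \<in> paths m. path_weight s = w}"
    using rw by (auto simp: paths_PS absw_red_inj)
  have "card {s \<in> PS (2 * m). last s = 0 \<and> absw (path_weight s) = absw w} \<noteq> 0"
    using lk by (simp add: aa_def lookup_W)
  then have "card {s \<in> paths m. path_weight s = w} = 1"
    using card_le1[of "2 * m" 0 "absw w"] seteq by simp
  then show "card {s \<in> paths (nat n). path_weight s = w} = 1" by (simp add: m_def)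
qed

end
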